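(* Let $\mathcal E$ be a nonlinear Dirichlet form on $L^2(\mu)$ (so that $\mathcal E_e$ exists). (a) For every $h\in\ker\|\cdot\|_{L_e}$ and every $\alpha\ge0$ the set $\{h>\alpha\}$ is $\mathcal E$-invariant. (b) If $\mathcal E$ is irreducible, then $\ker\|\cdot\|_{L_e}\subseteq\mathbb R\cdot1$.
   Context: $(X,\mathfrak A,\mu)$ is $\sigma$-finite; $L^0(\mu)$ carries local convergence in measure. A nonlinear Dirichlet form is a lower semicontinuous convex $\mathcal E\colon L^2(\mu)\to[0,\infty]$ with $\mathcal E(-f)=\mathcal E(f)$, $\mathcal E(0)=0$, such that $\mathcal E(f+Cg)+\mathcal E(f-Cg)\le\mathcal E(f+g)+\mathcal E(f-g)$ for all $f,g$ and every 1-Lipschitz $C\colon\mathbb R\to\mathbb R$ with $C(0)=0$. $\mathcal E_e$ is the lower semicontinuous relaxation on $L^0(\mu)$ (w.r.t. local convergence in measure) of $\mathcal E$ extended by $+\infty$ outside $L^2(\mu)$; $M(\mathcal E_e)=\{f:\lim_{\lambda\to0+}\mathcal E_e(\lambda f)=0\}$ and $\|f\|_{L_e}=\inf\{\lambda>0:\mathcal E_e(\lambda^{-1}f)\le1\}$ on $M(\mathcal E_e)$. A measurable $A\subseteq X$ is $\mathcal E$-invariant if $\mathcal E(1_Af)\le\mathcal E(f)$ for all $f\in L^2(\mu)$; $\mathcal E$ is irreducible if every $\mathcal E$-invariant set is null or co-null. *)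

theory Defs
  imports "HOL-Analysis.Analysis"
begin

definition L2 :: "'a measure \<Rightarrow> ('a \<Rightarrow> real) \<Rightarrow> bool" where
  "L2 M f \<longleftrightarrow> f \<in> borel_measurable M \<and> integrable M (\<lambda>x. (f x)\<^sup>2)"

text \<open>Nonlinear Dirichlet form on L^2(mu); E is only relevant on L^2 functions and
  respects equality almost everywhere (i.e. it is a function on L^2 classes).\<close>
definition nonlinear_dirichlet_form :: "'a measure \<Rightarrow> (('a \<Rightarrow> real) \<Rightarrow> ennreal) \<Rightarrow> bool" where
  "nonlinear_dirichlet_form M E \<longleftrightarrow>
     (\<forall>f g. L2 M f \<longrightarrow> L2 M g \<longrightarrow> (AE x in M. f x = g x) \<longrightarrow> E f = E g) \<and>
     (\<forall>f g t. L2 M f \<longrightarrow> L2 M g \<longrightarrow> 0 \<le> t \<longrightarrow> t \<le> 1 \<longrightarrow>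
        E (\<lambda>x. t * f x + (1 - t) * g x) \<le> ennreal t * E f + ennreal (1 - t) * E g) \<and>
     (\<forall>fs f. (\<forall>n. L2 M (fs n)) \<longrightarrow> L2 M f \<longrightarrow>
        ((\<lambda>n. integral\<^sup>L M (\<lambda>x. (fs n x - f x)\<^sup>2)) \<longlonglongrightarrow> 0) \<longrightarrow>
        E f \<le> liminf (\<lambda>n. E (fs n))) \<and>
     (\<forall>f. L2 M f \<longrightarrow> E (\<lambda>x. - f x) = E f) \<and>
     E (\<lambda>x. 0) = 0 \<and>
     (\<forall>f g C. L2 M f \<longrightarrow> L2 M g \<longrightarrow> (\<forall>s t. \<bar>C s - C t\<bar> \<le> \<bar>s - t\<bar>) \<longrightarrow> C 0 = 0 \<longrightarrow>
        E (\<lambda>x. f x + C (g x)) + E (\<lambda>x. f x - C (g x)) \<le> E (\<lambda>x. f x + g x) + E (\<lambda>x. f x - g x))"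

definition E_ext :: "'a measure \<Rightarrow> (('a \<Rightarrow> real) \<Rightarrow> ennreal) \<Rightarrow> ('a \<Rightarrow> real) \<Rightarrow> ennreal" where
  "E_ext M E f = (if L2 M f then E f else \<infinity>)"

definition conv_loc_measure :: "'a measure \<Rightarrow> (nat \<Rightarrow> 'a \<Rightarrow> real) \<Rightarrow> ('a \<Rightarrow> real) \<Rightarrow> bool" where
  "conv_loc_measure M fs f \<longleftrightarrow> f \<in> borel_measurable M \<and> (\<forall>n. fs n \<in> borel_measurable M) \<and>
     (\<forall>A\<in>sets M. emeasure M A < \<infinity> \<longrightarrow> (\<forall>\<epsilon>>0.
        ((\<lambda>n. emeasure M (A \<inter> {x\<in>space M. \<bar>fs n x - f x\<bar> > \<epsilon>})) \<longlonglongrightarrow> 0)))"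

text \<open>Lower semicontinuity w.r.t. local convergence in measure (metrizable for sigma-finite mu,
  so sequential lower semicontinuity).\<close>
definition lsc_L0 :: "'a measure \<Rightarrow> (('a \<Rightarrow> real) \<Rightarrow> ennreal) \<Rightarrow> bool" where
  "lsc_L0 M G \<longleftrightarrow> (\<forall>fs f. conv_loc_measure M fs f \<longrightarrow> G f \<le> liminf (\<lambda>n. G (fs n)))"

definition E_e :: "'a measure \<Rightarrow> (('a \<Rightarrow> real) \<Rightarrow> ennreal) \<Rightarrow> ('a \<Rightarrow> real) \<Rightarrow> ennreal" where
  "E_e M E f = (SUP G \<in> {G. lsc_L0 M G \<and> (\<forall>g. G g \<le> E_ext M E g)}. G f)"

definition M_Ee :: "'a measure \<Rightarrow> (('a \<Rightarrow> real) \<Rightarrow> ennreal) \<Rightarrow> ('a \<Rightarrow> real) set" where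
  "M_Ee M E = {f. f \<in> borel_measurable M \<and>
     ((\<lambda>l. E_e M E (\<lambda>x. l * f x)) \<longlongrightarrow> 0) (at_right (0::real))}"

definition norm_Le :: "'a measure \<Rightarrow> (('a \<Rightarrow> real) \<Rightarrow> ennreal) \<Rightarrow> ('a \<Rightarrow> real) \<Rightarrow> real" where
  "norm_Le M E f = Inf {l::real. l > 0 \<and> E_e M E (\<lambda>x. f x / l) \<le> 1}"

definition ker_Le :: "'a measure \<Rightarrow> (('a \<Rightarrow> real) \<Rightarrow> ennreal) \<Rightarrow> ('a \<Rightarrow> real) set" where
  "ker_Le M E = {f \<in> M_Ee M E. norm_Le M E f = 0}"

definition E_invariant :: "'a measure \<Rightarrow> (('a \<Rightarrow> real) \<Rightarrow> ennreal) \<Rightarrow> 'a set \<Rightarrow> bool" where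
  "E_invariant M E A \<longleftrightarrow> A \<in> sets M \<and>
     (\<forall>f. L2 M f \<longrightarrow> E (\<lambda>x. indicator A x * f x) \<le> E f)"

definition E_irreducible :: "'a measure \<Rightarrow> (('a \<Rightarrow> real) \<Rightarrow> ennreal) \<Rightarrow> bool" where
  "E_irreducible M E \<longleftrightarrow> (\<forall>A. E_invariant M E A \<longrightarrow>
     emeasure M A = 0 \<or> emeasure M (space M - A) = 0)"

end

theory Submission
  imports Defs
begin

lemma L2_bound:
  assumes "L2 M f" "L2 M g" "q \<in> borel_measurable M" "0 \<le> c" "0 \<le> d"
    and "\<And>x. x \<in> space M \<Longrightarrow> \<bar>q x\<bar> \<le> c * \<bar>f x\<bar> + d * \<bar>g x\<bar>"
  shows "L2 M q"
proof -
  have i: "integrable M (\<lambda>x. 2 * c\<^sup>2 * (f x)\<^sup>2 + 2 * d\<^sup>2 * (g x)\<^sup>2)"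
    using assms(1,2) unfolding L2_def by auto
  have "integrable M (\<lambda>x. (q x)\<^sup>2)"
  proof (rule Bochner_Integration.integrable_bound[OF i])
    show "(\<lambda>x. (q x)\<^sup>2) \<in> borel_measurable M" using assms(3) by measurable
    show "AE x in M. norm ((q x)\<^sup>2) \<le> norm (2 * c\<^sup>2 * (f x)\<^sup>2 + 2 * d\<^sup>2 * (g x)\<^sup>2)"
    proof (rule AE_I2)
      fix x assume x: "x \<in> space M"
      have "\<bar>q x\<bar>\<^sup>2 \<le> (c * \<bar>f x\<bar> + d * \<bar>g x\<bar>)\<^sup>2"
        using assms(6)[OF x] by (intro power_mono) auto
      also have "\<dots> \<le> 2 * c\<^sup>2 * (f x)\<^sup>2 + 2 * d\<^sup>2 * (g x)\<^sup>2"
      proof -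
        have "0 \<le> (c * \<bar>f x\<bar> - d * \<bar>g x\<bar>)\<^sup>2" by simp
        then show ?thesis by (simp add: power2_eq_square algebra_simps)
      qed
      finally show "norm ((q x)\<^sup>2) \<le> norm (2 * c\<^sup>2 * (f x)\<^sup>2 + 2 * d\<^sup>2 * (g x)\<^sup>2)" by simp
    qed
  qed
  then show ?thesis using assms(3) unfolding L2_def by simp
qed

lemma L2_measurable: "L2 M f \<Longrightarrow> f \<in> borel_measurable M" unfolding L2_def by simp

lemma L2_zero: "L2 M (\<lambda>x. 0)" unfolding L2_def by simp

lemma L2_bound1:
  assumes "L2 M f" "q \<in> borel_measurable M"
    and "\<And>x. x \<in> space M \<Longrightarrow> \<bar>q x\<bar> \<le> \<bar>f x\<bar>"
  shows "L2 M q"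
  using L2_bound[OF assms(1) L2_zero assms(2), of 1 0] assms(3) by simp

lemma L2_lin:
  assumes "L2 M f" "L2 M g"
  shows "L2 M (\<lambda>x. a * f x + b * g x)"
proof (rule L2_bound[OF assms, of _ "\<bar>a\<bar>" "\<bar>b\<bar>"])
  have [measurable]: "f \<in> borel_measurable M" "g \<in> borel_measurable M"
    using assms by (auto dest: L2_measurable)
  show "(\<lambda>x. a * f x + b * g x) \<in> borel_measurable M" by measurable
  show "\<bar>a * f x + b * g x\<bar> \<le> \<bar>a\<bar> * \<bar>f x\<bar> + \<bar>b\<bar> * \<bar>g x\<bar>" for x
    by (metis abs_mult abs_triangle_ineq)
qed auto

lemma L2_minus: "L2 M f \<Longrightarrow> L2 M (\<lambda>x. - f x)"
  using L2_lin[of M f f "-1" 0] by simp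

lemma ennreal_half_le:
  fixes a b :: ennreal
  assumes "a + a \<le> b + b" shows "a \<le> b"
  using assms by (metis add_strict_mono verit_comp_simplify1(3))

context
  fixes M :: "'a measure" and E :: "('a \<Rightarrow> real) \<Rightarrow> ennreal"
  assumes ndf: "nonlinear_dirichlet_form M E"
begin

lemma E_convex: "L2 M f \<Longrightarrow> L2 M g \<Longrightarrow> 0 \<le> t \<Longrightarrow> t \<le> 1 \<Longrightarrow>
  E (\<lambda>x. t * f x + (1 - t) * g x) \<le> ennreal t * E f + ennreal (1 - t) * E g"
  using ndf unfolding nonlinear_dirichlet_form_def by blast

lemma E_lsc: "(\<And>n. L2 M (fs n)) \<Longrightarrow> L2 M f \<Longrightarrow>
  ((\<lambda>n. integral\<^sup>L M (\<lambda>x. (fs n x - f x)\<^sup>2)) \<longlonglongrightarrow> 0) \<Longrightarrow> E f \<le> liminf (\<lambda>n. E (fs n))"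
  using ndf unfolding nonlinear_dirichlet_form_def by blast

lemma E_symm: "L2 M f \<Longrightarrow> E (\<lambda>x. - f x) = E f"
  using ndf unfolding nonlinear_dirichlet_form_def by blast

lemma E_zero: "E (\<lambda>x. 0) = 0"
  using ndf unfolding nonlinear_dirichlet_form_def by blast

lemma E_contr: "L2 M f \<Longrightarrow> L2 M g \<Longrightarrow> (\<forall>s t. \<bar>C s - C t\<bar> \<le> \<bar>s - t\<bar>) \<Longrightarrow> C 0 = 0 \<Longrightarrow>
   E (\<lambda>x. f x + C (g x)) + E (\<lambda>x. f x - C (g x)) \<le> E (\<lambda>x. f x + g x) + E (\<lambda>x. f x - g x)"
  using ndf unfolding nonlinear_dirichlet_form_def by blast

lemma E_scale:
  assumes "L2 M g" "0 \<le> t" "t \<le> 1"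
  shows "E (\<lambda>x. t * g x) \<le> ennreal t * E g"
  using E_convex[OF assms(1) L2_zero assms(2,3)] by (simp add: E_zero)

lemma E_contr1:
  assumes g: "L2 M g" and C: "\<forall>s t. \<bar>C s - C t\<bar> \<le> \<bar>s - t\<bar>" "C 0 = 0"
    and m: "(\<lambda>x. C (g x)) \<in> borel_measurable M"
  shows "E (\<lambda>x. C (g x)) \<le> E g"
proof -
  have L: "L2 M (\<lambda>x. C (g x))"
  proof (rule L2_bound1[OF g m])
    fix x show "\<bar>C (g x)\<bar> \<le> \<bar>g x\<bar>" using C by (metis diff_zero)
  qed
  have "E (\<lambda>x. 0 + C (g x)) + E (\<lambda>x. 0 - C (g x)) \<le> E (\<lambda>x. 0 + g x) + E (\<lambda>x. 0 - g x)"
    by (rule E_contr[OF L2_zero g C])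
  then have "E (\<lambda>x. C (g x)) + E (\<lambda>x. C (g x)) \<le> E g + E g"
    using E_symm[OF L] E_symm[OF g] by simp
  then show ?thesis by (rule ennreal_half_le)
qed

lemma E_minmax:
  assumes a: "L2 M a" and b: "L2 M b"
  shows "E (\<lambda>x. max (a x) (b x)) + E (\<lambda>x. min (a x) (b x)) \<le> E a + E b"
proof -
  define F where "F = (\<lambda>x. (1/2) * a x + (1/2) * b x)"
  define G where "G = (\<lambda>x. (1/2) * a x + (-1/2) * b x)"
  have LF: "L2 M F" unfolding F_def by (rule L2_lin[OF a b])
  have LG: "L2 M G" unfolding G_def by (rule L2_lin[OF a b])
  have C: "\<forall>s t::real. \<bar>abs s - abs t\<bar> \<le> \<bar>s - t\<bar>" by (intro allI) linarith
  have "E (\<lambda>x. F x + abs (G x)) + E (\<lambda>x. F x - abs (G x)) \<le> E (\<lambda>x. F x + G x) + E (\<lambda>x. F x - G x)"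
    by (rule E_contr[OF LF LG C]) simp
  moreover have "(\<lambda>x. F x + abs (G x)) = (\<lambda>x. max (a x) (b x))"
  proof (rule ext)
    fix x show "F x + abs (G x) = max (a x) (b x)"
      unfolding F_def G_def by (cases "a x \<le> b x") (auto simp: max_def abs_if field_simps)
  qed
  moreover have "(\<lambda>x. F x - abs (G x)) = (\<lambda>x. min (a x) (b x))"
  proof (rule ext)
    fix x show "F x - abs (G x) = min (a x) (b x)"
      unfolding F_def G_def by (cases "a x \<le> b x") (auto simp: min_def abs_if field_simps)
  qed
  moreover have "(\<lambda>x. F x + G x) = a" unfolding F_def G_def by (rule ext) (simp add: field_simps)
  moreover have "(\<lambda>x. F x - G x) = b" unfolding F_def G_def by (rule ext) (simp add: field_simps)
  ultimately show ?thesis by simp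
qed

lemma E_max: assumes "L2 M a" "L2 M b" shows "E (\<lambda>x. max (a x) (b x)) \<le> E a + E b"
proof -
  have "E (\<lambda>x. max (a x) (b x)) \<le> E (\<lambda>x. max (a x) (b x)) + E (\<lambda>x. min (a x) (b x))"
    by (rule add_increasing2[OF zero_le order_refl])
  with E_minmax[OF assms] show ?thesis by (meson order_trans)
qed

lemma E_min: assumes "L2 M a" "L2 M b" shows "E (\<lambda>x. min (a x) (b x)) \<le> E a + E b"
proof -
  have "E (\<lambda>x. min (a x) (b x)) \<le> E (\<lambda>x. max (a x) (b x)) + E (\<lambda>x. min (a x) (b x))"
    by (rule add_increasing[OF zero_le order_refl])
  with E_minmax[OF assms] show ?thesis by (meson order_trans)
qed

lemma E_clip:
  assumes f: "L2 M f" and u: "L2 M u"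
  shows "E (\<lambda>x. max (- u x) (min (f x) (u x))) \<le> E f + E u + E u"
proof -
  have m: "L2 M (\<lambda>x. min (f x) (u x))"
  proof (rule L2_bound[OF f u, of _ 1 1])
    have [measurable]: "f \<in> borel_measurable M" "u \<in> borel_measurable M"
      using f u by (auto dest: L2_measurable)
    show "(\<lambda>x. min (f x) (u x)) \<in> borel_measurable M" by measurable
  qed auto
  have "E (\<lambda>x. max (- u x) (min (f x) (u x))) \<le> E (\<lambda>x. - u x) + E (\<lambda>x. min (f x) (u x))"
    by (rule E_max[OF L2_minus[OF u] m])
  also have "\<dots> \<le> E u + (E f + E u)"
    using E_symm[OF u] E_min[OF f u] by (simp add: add_mono)
  finally show ?thesis by (simp add: ac_simps)
qed

end

lemma dom_meas:
  fixes D :: "nat \<Rightarrow> 'a \<Rightarrow> real" and F :: "'a \<Rightarrow> real"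
  assumes sf: "sigma_finite_measure M" and F: "integrable M F"
    and Dm: "\<And>n. D n \<in> borel_measurable M"
    and D0: "\<And>n x. x \<in> space M \<Longrightarrow> 0 \<le> D n x"
    and DF: "\<And>n x. x \<in> space M \<Longrightarrow> D n x \<le> F x"
    and conv: "\<And>A \<eta>. A \<in> sets M \<Longrightarrow> emeasure M A < \<infinity> \<Longrightarrow> \<eta> > 0 \<Longrightarrow>
        (\<lambda>n. emeasure M (A \<inter> {x\<in>space M. \<eta> < D n x})) \<longlonglongrightarrow> 0"
  shows "(\<lambda>n. integral\<^sup>L M (D n)) \<longlonglongrightarrow> 0"
proof -
  interpret sigma_finite_measure M by fact
  obtain A where A: "range A \<subseteq> sets M" "(\<Union>i. A i) = space M"
      "\<And>i. emeasure M (A i) \<noteq> \<infinity>" "incseq A"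
    using sigma_finite_incseq by blast
  have Am[measurable]: "\<And>k. A k \<in> sets M" using A(1) by auto
  have Fm[measurable]: "F \<in> borel_measurable M" using F by auto
  have Dm'[measurable]: "\<And>n. D n \<in> borel_measurable M" by (rule Dm)
  have F0: "\<And>x. x \<in> space M \<Longrightarrow> 0 \<le> F x" using D0 DF by (meson order_trans)
  have t1: "(\<lambda>k. integral\<^sup>L M (\<lambda>x. F x * indicator (space M - A k) x)) \<longlonglongrightarrow> 0"
  proof -
    have "(\<lambda>k. integral\<^sup>L M (\<lambda>x. F x * indicator (space M - A k) x)) \<longlonglongrightarrow> integral\<^sup>L M (\<lambda>x. 0)"
    proof (rule integral_dominated_convergence[where w=F])
      show "(\<lambda>x. 0::real) \<in> borel_measurable M" by simp
      show "\<And>k. (\<lambda>x. F x * indicator (space M - A k) x) \<in> borel_measurable M" by measurable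
      show "integrable M F" by fact
      show "AE x in M. (\<lambda>k. F x * indicator (space M - A k) x) \<longlonglongrightarrow> 0"
      proof (rule AE_I2)
        fix x assume x: "x \<in> space M"
        then obtain i where "x \<in> A i" using A(2) by auto
        then have "\<forall>k\<ge>i. x \<in> A k" using A(4) by (auto simp: incseq_def)
        then have "eventually (\<lambda>k. F x * indicator (space M - A k) x = 0) sequentially"
          unfolding eventually_sequentially by (intro exI[of _ i]) (auto simp: indicator_def)
        then show "(\<lambda>k. F x * indicator (space M - A k) x) \<longlonglongrightarrow> 0" by (rule tendsto_eventually)
      qed
      show "\<And>k. AE x in M. norm (F x * indicator (space M - A k) x) \<le> F x"
        by (intro AE_I2) (auto simp: F0 indicator_def)
    qed
    then show ?thesis by simp
  qed
  have t2: "(\<lambda>K::nat. integral\<^sup>L M (\<lambda>x. max (F x - real K) 0)) \<longlonglongrightarrow> 0"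
  proof -
    have "(\<lambda>K::nat. integral\<^sup>L M (\<lambda>x. max (F x - real K) 0)) \<longlonglongrightarrow> integral\<^sup>L M (\<lambda>x. 0)"
    proof (rule integral_dominated_convergence[where w=F])
      show "(\<lambda>x. 0::real) \<in> borel_measurable M" by simp
      show "\<And>K. (\<lambda>x. max (F x - real K) 0) \<in> borel_measurable M" by measurable
      show "integrable M F" by fact
      show "AE x in M. (\<lambda>K. max (F x - real K) 0) \<longlonglongrightarrow> 0"
      proof (rule AE_I2)
        fix x assume x: "x \<in> space M"
        obtain N where "F x \<le> real N" using real_arch_simple by blast
        then have "eventually (\<lambda>K. max (F x - real K) 0 = 0) sequentially"
          unfolding eventually_sequentially
          by (intro exI[of _ N]) auto
        then show "(\<lambda>K. max (F x - real K) 0) \<longlonglongrightarrow> 0" by (rule tendsto_eventually)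
      qed
      show "\<And>K. AE x in M. norm (max (F x - real K) 0) \<le> F x"
        by (intro AE_I2) (auto simp: F0)
    qed
    then show ?thesis by simp
  qed
  show ?thesis
  proof (rule LIMSEQ_I)
    fix r :: real assume r: "0 < r"
    have "eventually (\<lambda>k. integral\<^sup>L M (\<lambda>x. F x * indicator (space M - A k) x) < r/4) sequentially"
      using order_tendstoD(2)[OF t1, of "r/4"] r by simp
    then obtain k where k: "integral\<^sup>L M (\<lambda>x. F x * indicator (space M - A k) x) < r/4"
      unfolding eventually_sequentially by blast
    have "eventually (\<lambda>K. integral\<^sup>L M (\<lambda>x. max (F x - real K) 0) < r/4) sequentially"
      using order_tendstoD(2)[OF t2, of "r/4"] r by simp
    then obtain K where K: "integral\<^sup>L M (\<lambda>x. max (F x - real K) 0) < r/4"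
      unfolding eventually_sequentially by blast
    define B where "B = A k"
    have Bm[measurable]: "B \<in> sets M" unfolding B_def by simp
    have Bfin: "emeasure M B < \<infinity>" unfolding B_def using A(3) by (simp add: less_top)
    define mB where "mB = measure M B"
    have mB0: "0 \<le> mB" unfolding mB_def by simp
    define \<eta> where "\<eta> = r / (4 * (mB + 1))"
    have \<eta>0: "0 < \<eta>" unfolding \<eta>_def using r mB0 by simp
    have \<eta>B: "\<eta> * mB < r / 4"
    proof -
      have "\<eta> * mB = (r/4) * (mB / (mB + 1))" unfolding \<eta>_def using mB0 by (simp add: field_simps)
      also have "\<dots> < (r/4) * 1" using r mB0 by (intro mult_strict_left_mono) auto
      finally show ?thesis by simp
    qed
    define \<delta> where "\<delta> = r / (4 * (real K + 1))"
    have \<delta>0: "0 < \<delta>" unfolding \<delta>_def using r by simp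
    have K\<delta>: "real K * \<delta> < r / 4"
    proof -
      have "real K * \<delta> = (r/4) * (real K / (real K + 1))" unfolding \<delta>_def by (simp add: field_simps)
      also have "\<dots> < (r/4) * 1" using r by (intro mult_strict_left_mono) auto
      finally show ?thesis by simp
    qed
    have "eventually (\<lambda>n. emeasure M (B \<inter> {x\<in>space M. \<eta> < D n x}) < ennreal \<delta>) sequentially"
      using order_tendstoD(2)[OF conv[OF Bm Bfin \<eta>0], of "ennreal \<delta>"] \<delta>0 by simp
    then obtain N where N: "\<And>n. N \<le> n \<Longrightarrow> emeasure M (B \<inter> {x\<in>space M. \<eta> < D n x}) < ennreal \<delta>"
      unfolding eventually_sequentially by blast
    show "\<exists>no. \<forall>n\<ge>no. norm (integral\<^sup>L M (D n) - 0) < r"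
    proof (intro exI allI impI)
      fix n assume n: "N \<le> n"
      define Ev where "Ev = B \<inter> {x\<in>space M. \<eta> < D n x}"
      have Evm[measurable]: "Ev \<in> sets M" unfolding Ev_def by measurable
      have Evfin: "emeasure M Ev < ennreal \<delta>" unfolding Ev_def using N[OF n] .
      then have "emeasure M Ev \<noteq> \<infinity>" using top.not_eq_extremum by fastforce
      then have mEv: "measure M Ev < \<delta>"
        using Evfin emeasure_eq_ennreal_measure[of M Ev] by (simp add: ennreal_less_iff)
      have iF1: "integrable M (\<lambda>x. F x * indicator (space M - B) x)"
        by (rule Bochner_Integration.integrable_bound[OF F]) (auto intro!: AE_I2 simp: F0 indicator_def)
      have iF2: "integrable M (\<lambda>x. max (F x - real K) 0)"
        by (rule Bochner_Integration.integrable_bound[OF F]) (auto intro!: AE_I2 simp: F0)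
      have iB: "integrable M (\<lambda>x. \<eta> * indicator B x)"
        using Bfin by (intro integrable_mult_right integrable_real_indicator) auto
      have Evinf: "emeasure M Ev < \<infinity>" using \<open>emeasure M Ev \<noteq> \<infinity>\<close> by (simp add: less_top)
      have iEv: "integrable M (\<lambda>x. real K * indicator Ev x)"
        using Evm Evinf by (intro integrable_mult_right integrable_real_indicator) auto
      have iD: "integrable M (D n)"
        by (rule Bochner_Integration.integrable_bound[OF F]) (auto intro!: AE_I2 simp: D0 DF abs_of_nonneg intro: order_trans[OF _ abs_ge_self])
      have "integral\<^sup>L M (D n) \<le> integral\<^sup>L M (\<lambda>x. F x * indicator (space M - B) x + \<eta> * indicator B x
             + max (F x - real K) 0 + real K * indicator Ev x)"
      proof (rule integral_mono)
        show "integrable M (D n)" by (rule iD)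
        show "integrable M (\<lambda>x. F x * indicator (space M - B) x + \<eta> * indicator B x
             + max (F x - real K) 0 + real K * indicator Ev x)"
          using iF1 iF2 iB iEv by auto
        fix x assume x: "x \<in> space M"
        show "D n x \<le> F x * indicator (space M - B) x + \<eta> * indicator B x
             + max (F x - real K) 0 + real K * indicator Ev x"
        proof (cases "x \<in> B")
          case False
          then show ?thesis using x DF[where n=n, OF x] F0[OF x] by (auto simp: indicator_def Ev_def)
        next
          case True
          show ?thesis
          proof (cases "\<eta> < D n x")
            case False
            then show ?thesis using x True F0[OF x] by (auto simp: indicator_def Ev_def)
          next
            case c: True
            then have "x \<in> Ev" using x True unfolding Ev_def by auto
            then show ?thesis using x True DF[where n=n, OF x] F0[OF x] \<eta>0 by (auto simp: indicator_def)
          qed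
        qed
      qed
      also have "\<dots> = integral\<^sup>L M (\<lambda>x. F x * indicator (space M - B) x) + \<eta> * mB
             + integral\<^sup>L M (\<lambda>x. max (F x - real K) 0) + real K * measure M Ev"
        using iF1 iF2 iB iEv Bfin by (simp add: mB_def)
      also have "\<dots> < r/4 + r/4 + r/4 + r/4"
      proof -
        have "real K * measure M Ev \<le> real K * \<delta>" using mEv by (intro mult_left_mono) auto
        then show ?thesis using k K \<eta>B K\<delta> unfolding B_def by linarith
      qed
      finally have "integral\<^sup>L M (D n) < r" by simp
      moreover have "0 \<le> integral\<^sup>L M (D n)" by (rule integral_nonneg_AE) (auto intro!: AE_I2 simp: D0)
      ultimately show "norm (integral\<^sup>L M (D n) - 0) < r" by simp
    qed
  qed
qed

definition uf :: "real \<Rightarrow> real \<Rightarrow> real \<Rightarrow> ('a \<Rightarrow> real) \<Rightarrow> 'a \<Rightarrow> real" where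
  "uf lam sig bet g x = max 0 (lam * (sig * g x) - bet)"

definition clipw :: "('a \<Rightarrow> real) \<Rightarrow> real \<Rightarrow> real \<Rightarrow> real \<Rightarrow> ('a \<Rightarrow> real) \<Rightarrow> 'a \<Rightarrow> real" where
  "clipw f lam sig bet g x = max (- uf lam sig bet g x) (min (f x) (uf lam sig bet g x))"

lemma clipw_eq: "clipw f lam sig bet g = (\<lambda>x. max (- max 0 (lam * (sig * g x) - bet)) (min (f x) (max 0 (lam * (sig * g x) - bet))))"
  by (rule ext) (simp add: clipw_def uf_def)

lemma clip_abs: "0 \<le> (u::real) \<Longrightarrow> \<bar>max (- u) (min a u)\<bar> \<le> \<bar>a\<bar>"
  by (auto simp: max_def min_def abs_if)

lemma clip_lip: "0 \<le> (u::real) \<Longrightarrow> 0 \<le> v \<Longrightarrow> \<bar>max (- u) (min a u) - max (- v) (min a v)\<bar> \<le> \<bar>u - v\<bar>"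
  unfolding max_def min_def abs_if by auto

lemma max0_lip: "\<bar>max 0 (p::real) - max 0 q\<bar> \<le> \<bar>p - q\<bar>"
  unfolding max_def abs_if by auto

lemma clipw_abs: "\<bar>clipw f lam sig bet g x\<bar> \<le> \<bar>f x\<bar>"
  unfolding clipw_def by (rule clip_abs) (simp add: uf_def)

lemma clipw_lip:
  assumes "0 \<le> lam" "\<bar>sig\<bar> = 1"
  shows "\<bar>clipw f lam sig bet g x - clipw f lam sig bet g' x\<bar> \<le> lam * \<bar>g x - g' x\<bar>"
proof -
  have "\<bar>clipw f lam sig bet g x - clipw f lam sig bet g' x\<bar> \<le> \<bar>uf lam sig bet g x - uf lam sig bet g' x\<bar>"
    unfolding clipw_def by (rule clip_lip) (simp_all add: uf_def)
  also have "\<dots> \<le> \<bar>(lam * (sig * g x) - bet) - (lam * (sig * g' x) - bet)\<bar>"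
    unfolding uf_def by (rule max0_lip)
  also have "\<dots> = \<bar>lam * sig * (g x - g' x)\<bar>"
    by (rule arg_cong[where f=abs]) (simp add: algebra_simps)
  also have "\<dots> = lam * \<bar>sig\<bar> * \<bar>g x - g' x\<bar>"
    using assms(1) by (simp add: abs_mult)
  finally show ?thesis using assms(2) by simp
qed

lemma clipw_meas:
  assumes [measurable]: "f \<in> borel_measurable M" "g \<in> borel_measurable M"
  shows "clipw f lam sig bet g \<in> borel_measurable M"
  unfolding clipw_eq by measurable

lemma clipw_L2:
  assumes "L2 M f" "g \<in> borel_measurable M"
  shows "L2 M (clipw f lam sig bet g)"
  by (rule L2_bound1[OF assms(1) clipw_meas[OF L2_measurable[OF assms(1)] assms(2)] clipw_abs])

lemma E_e_ge:
  assumes "lsc_L0 M G" "\<And>g. G g \<le> E_ext M E g"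
  shows "G g \<le> E_e M E g"
  unfolding E_e_def by (rule SUP_upper[where f="\<lambda>G. G g"]) (use assms in auto)

lemma ennreal_4:
  assumes "0 \<le> lam" "(x::ennreal) \<le> 2"
  shows "ennreal lam * x + ennreal lam * x \<le> ennreal (4*lam)"
proof -
  have "ennreal lam * x + ennreal lam * x \<le> ennreal lam * 2 + ennreal lam * 2"
    using assms by (intro add_mono mult_left_mono) auto
  also have "\<dots> = ennreal lam * 4" by (simp flip: distrib_left)
  also have "\<dots> = ennreal (4*lam)" using assms by (simp add: ennreal_mult mult.commute)
  finally show ?thesis .
qed

context
  fixes M :: "'a measure" and E :: "('a \<Rightarrow> real) \<Rightarrow> ennreal"
  assumes ndf: "nonlinear_dirichlet_form M E"
begin

lemma E_clipw_bound:
  assumes f: "L2 M f" and g: "L2 M g" and lam: "0 < lam" "lam \<le> 1" and sig: "\<bar>sig\<bar> = 1"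
    and bet: "0 \<le> bet"
  shows "E (clipw f lam sig bet g) \<le> E f + ennreal lam * E g + ennreal lam * E g"
proof -
  have [measurable]: "g \<in> borel_measurable M" "f \<in> borel_measurable M"
    using f g by (auto dest: L2_measurable)
  have Lg: "L2 M (\<lambda>x. lam * g x)"
    by (rule L2_bound1[OF g]) (use lam in \<open>auto simp: abs_mult intro!: mult_left_le_one_le\<close>)
  define C where "C = (\<lambda>s::real. max 0 (sig * s - bet))"
  have C1: "\<forall>s t. \<bar>C s - C t\<bar> \<le> \<bar>s - t\<bar>"
  proof (intro allI)
    fix s t
    have "\<bar>C s - C t\<bar> \<le> \<bar>(sig * s - bet) - (sig * t - bet)\<bar>"
      unfolding C_def by (rule max0_lip)
    also have "\<dots> = \<bar>sig\<bar> * \<bar>s - t\<bar>" by (simp add: abs_mult right_diff_distrib[symmetric])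
    finally show "\<bar>C s - C t\<bar> \<le> \<bar>s - t\<bar>" using sig by simp
  qed
  have C0: "C 0 = 0" unfolding C_def using bet by simp
  have ueq: "(\<lambda>x. C (lam * g x)) = uf lam sig bet g"
    by (rule ext) (simp add: C_def uf_def ac_simps)
  have um: "(\<lambda>x. C (lam * g x)) \<in> borel_measurable M" unfolding C_def by measurable
  have Eu: "E (uf lam sig bet g) \<le> ennreal lam * E g"
  proof -
    have "E (\<lambda>x. C (lam * g x)) \<le> E (\<lambda>x. lam * g x)"
      by (rule E_contr1[OF ndf Lg C1 C0 um])
    also have "\<dots> \<le> ennreal lam * E g" by (rule E_scale[OF ndf g]) (use lam in auto)
    finally show ?thesis using ueq by simp
  qed
  have Lu: "L2 M (uf lam sig bet g)"
  proof -
    have "L2 M (\<lambda>x. C (lam * g x))"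
      by (rule L2_bound1[OF Lg um]) (metis C0 C1 diff_zero)
    then show ?thesis using ueq by simp
  qed
  have "clipw f lam sig bet g = (\<lambda>x. max (- uf lam sig bet g x) (min (f x) (uf lam sig bet g x)))"
    by (rule ext) (simp add: clipw_def)
  then have "E (clipw f lam sig bet g) \<le> E f + E (uf lam sig bet g) + E (uf lam sig bet g)"
    using E_clip[OF ndf f Lu] by simp
  also have "\<dots> \<le> E f + ennreal lam * E g + ennreal lam * E g"
    using Eu by (intro add_mono) auto
  finally show ?thesis .
qed

lemma G_lsc:
  assumes sf: "sigma_finite_measure M" and f: "L2 M f" and lam: "0 < lam" and sig: "\<bar>sig\<bar> = 1"
  shows "lsc_L0 M (\<lambda>g. if c < E (clipw f lam sig bet g) then 2 else 0)"
  unfolding lsc_L0_def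
proof (intro allI impI)
  fix gs g assume cv: "conv_loc_measure M gs g"
  have gm[measurable]: "g \<in> borel_measurable M" and gsm[measurable]: "\<And>n. gs n \<in> borel_measurable M"
    using cv unfolding conv_loc_measure_def by auto
  have cvA: "\<And>A \<epsilon>. A \<in> sets M \<Longrightarrow> emeasure M A < \<infinity> \<Longrightarrow> 0 < \<epsilon> \<Longrightarrow>
     (\<lambda>n. emeasure M (A \<inter> {x\<in>space M. \<bar>gs n x - g x\<bar> > \<epsilon>})) \<longlonglongrightarrow> 0"
    using cv unfolding conv_loc_measure_def by auto
  have fm[measurable]: "f \<in> borel_measurable M" using f by (rule L2_measurable)
  have wm[measurable]: "\<And>n. clipw f lam sig bet (gs n) \<in> borel_measurable M"
    "clipw f lam sig bet g \<in> borel_measurable M"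
    by (auto intro: clipw_meas)
  have key: "E (clipw f lam sig bet g) \<le> liminf (\<lambda>n. E (clipw f lam sig bet (gs n)))"
  proof (rule E_lsc[OF ndf])
    show "\<And>n. L2 M (clipw f lam sig bet (gs n))" by (rule clipw_L2[OF f]) simp
    show "L2 M (clipw f lam sig bet g)" by (rule clipw_L2[OF f]) simp
    show "(\<lambda>n. \<integral>x. (clipw f lam sig bet (gs n) x - clipw f lam sig bet g x)\<^sup>2 \<partial>M) \<longlonglongrightarrow> 0"
    proof (rule dom_meas[OF sf, where F="\<lambda>x. 4 * (f x)\<^sup>2"])
      show "integrable M (\<lambda>x. 4 * (f x)\<^sup>2)" using f unfolding L2_def by auto
      show "\<And>n. (\<lambda>x. (clipw f lam sig bet (gs n) x - clipw f lam sig bet g x)\<^sup>2) \<in> borel_measurable M"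
        by measurable
      show "\<And>n x. 0 \<le> (clipw f lam sig bet (gs n) x - clipw f lam sig bet g x)\<^sup>2" by simp
      show "(clipw f lam sig bet (gs n) x - clipw f lam sig bet g x)\<^sup>2 \<le> 4 * (f x)\<^sup>2" for n x
      proof -
        have "\<bar>clipw f lam sig bet (gs n) x - clipw f lam sig bet g x\<bar> \<le> 2 * \<bar>f x\<bar>"
          using clipw_abs[of f lam sig bet "gs n" x] clipw_abs[of f lam sig bet g x] by linarith
        then have "\<bar>clipw f lam sig bet (gs n) x - clipw f lam sig bet g x\<bar>\<^sup>2 \<le> (2 * \<bar>f x\<bar>)\<^sup>2"
          by (intro power_mono) auto
        then show ?thesis by (simp add: power_mult_distrib)
      qed
      fix A \<eta> assume A: "A \<in> sets M" "emeasure M A < \<infinity>" and \<eta>: "(0::real) < \<eta>"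
      define \<epsilon> where "\<epsilon> = sqrt \<eta> / lam"
      have \<epsilon>: "0 < \<epsilon>" unfolding \<epsilon>_def using \<eta> lam by simp
      have lim: "(\<lambda>n. emeasure M (A \<inter> {x\<in>space M. \<bar>gs n x - g x\<bar> > \<epsilon>})) \<longlonglongrightarrow> 0"
        by (rule cvA[OF A \<epsilon>])
      have sub: "A \<inter> {x\<in>space M. \<eta> < (clipw f lam sig bet (gs n) x - clipw f lam sig bet g x)\<^sup>2}
          \<subseteq> A \<inter> {x\<in>space M. \<bar>gs n x - g x\<bar> > \<epsilon>}" for n
      proof safe
        fix x assume x: "x \<in> space M" "\<eta> < (clipw f lam sig bet (gs n) x - clipw f lam sig bet g x)\<^sup>2"
        have "sqrt \<eta> < \<bar>clipw f lam sig bet (gs n) x - clipw f lam sig bet g x\<bar>"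
          using x(2) by (metis real_sqrt_abs real_sqrt_less_iff)
        also have "\<dots> \<le> lam * \<bar>gs n x - g x\<bar>" by (rule clipw_lip) (use lam sig in auto)
        finally show "\<bar>gs n x - g x\<bar> > \<epsilon>" unfolding \<epsilon>_def using lam by (simp add: divide_less_eq mult.commute)
      qed
      show "(\<lambda>n. emeasure M (A \<inter> {x\<in>space M. \<eta> < (clipw f lam sig bet (gs n) x - clipw f lam sig bet g x)\<^sup>2})) \<longlonglongrightarrow> 0"
      proof (rule tendsto_sandwich[OF _ _ tendsto_const lim])
        show "\<forall>\<^sub>F n in sequentially. 0 \<le> emeasure M (A \<inter> {x\<in>space M. \<eta> < (clipw f lam sig bet (gs n) x - clipw f lam sig bet g x)\<^sup>2})"
          by simp
        show "\<forall>\<^sub>F n in sequentially. emeasure M (A \<inter> {x\<in>space M. \<eta> < (clipw f lam sig bet (gs n) x - clipw f lam sig bet g x)\<^sup>2})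
            \<le> emeasure M (A \<inter> {x\<in>space M. \<bar>gs n x - g x\<bar> > \<epsilon>})"
        proof (intro always_eventually allI emeasure_mono[OF sub])
          fix n
          have [measurable]: "A \<in> sets M" by (rule A(1))
          show "A \<inter> {x\<in>space M. \<bar>gs n x - g x\<bar> > \<epsilon>} \<in> sets M" by measurable
        qed
      qed
    qed
  qed
  show "(if c < E (clipw f lam sig bet g) then 2 else 0)
        \<le> liminf (\<lambda>n. if c < E (clipw f lam sig bet (gs n)) then 2 else (0::ennreal))"
  proof (cases "c < E (clipw f lam sig bet g)")
    case True
    then have "eventually (\<lambda>n. c < E (clipw f lam sig bet (gs n))) sequentially"
      using key[unfolded le_Liminf_iff, rule_format, OF True] by simp
    then have "eventually (\<lambda>n. 2 \<le> (if c < E (clipw f lam sig bet (gs n)) then 2 else (0::ennreal))) sequentially"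
      by eventually_elim simp
    then have "2 \<le> liminf (\<lambda>n. if c < E (clipw f lam sig bet (gs n)) then 2 else (0::ennreal))"
      by (rule Liminf_bounded)
    then show ?thesis using True by simp
  qed simp
qed

lemma G_le:
  assumes f: "L2 M f" and lam: "0 < lam" "lam \<le> 1" and sig: "\<bar>sig\<bar> = 1" and bet: "0 \<le> bet"
  shows "(if E f + ennreal (4*lam) < E (clipw f lam sig bet g) then 2 else 0) \<le> E_ext M E g"
proof (cases "L2 M g")
  case False
  then show ?thesis by (simp add: E_ext_def)
next
  case g: True
  show ?thesis
  proof (cases "E g \<le> 2")
    case True
    have "E (clipw f lam sig bet g) \<le> E f + ennreal lam * E g + ennreal lam * E g"
      by (rule E_clipw_bound[OF f g lam sig bet])
    also have "\<dots> \<le> E f + ennreal (4*lam)"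
      using ennreal_4[of lam "E g"] lam True by (simp add: add.assoc add_left_mono)
    finally have "\<not> (E f + ennreal (4*lam) < E (clipw f lam sig bet g))" by (simp add: not_less)
    then show ?thesis by simp
  next
    case False
    then show ?thesis using g by (auto simp: E_ext_def not_le less_imp_le)
  qed
qed

end

lemma clip_big: "\<bar>a\<bar> \<le> (p::real) \<Longrightarrow> max (- max 0 p) (min a (max 0 p)) = a"
  by (auto simp: max_def min_def abs_le_iff)

lemma clip_zero: "(p::real) \<le> 0 \<Longrightarrow> max (- max 0 p) (min a (max 0 p)) = 0"
  by (auto simp: max_def min_def)

context
  fixes M :: "'a measure" and E :: "('a \<Rightarrow> real) \<Rightarrow> ennreal"
  assumes ndf: "nonlinear_dirichlet_form M E"
begin

lemma core:
  assumes sf: "sigma_finite_measure M" and hm[measurable]: "h \<in> borel_measurable M"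
    and small: "\<And>\<epsilon>. 0 < \<epsilon> \<Longrightarrow> \<exists>l>0. l < \<epsilon> \<and> E_e M E (\<lambda>x. h x / l) \<le> 1"
    and sig: "\<bar>sig\<bar> = 1" and \<alpha>: "0 \<le> \<alpha>"
  shows "E_invariant M E {x\<in>space M. sig * h x > \<alpha>}"
proof -
  define A where "A = {x\<in>space M. sig * h x > \<alpha>}"
  have Am[measurable]: "A \<in> sets M" unfolding A_def by measurable
  have main: "E (\<lambda>x. indicator A x * f x) \<le> E f" if f: "L2 M f" for f
  proof -
    have fm[measurable]: "f \<in> borel_measurable M" using f by (rule L2_measurable)
    have step: "E (clipw f S sig (S*\<alpha>) h) \<le> E f" if S: "0 < S" for S
    proof (rule ennreal_le_epsilon)
      fix e :: real assume e: "0 < e"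
      obtain l where l: "0 < l" "l < min (1/S) (e/(4*S))" "E_e M E (\<lambda>x. h x / l) \<le> 1"
        using small[of "min (1/S) (e/(4*S))"] S e by auto
      define lam where "lam = S * l"
      have lam0: "0 < lam" unfolding lam_def using S l by simp
      have lam1: "lam \<le> 1"
      proof -
        have "l < 1/S" using l(2) by simp
        then show ?thesis unfolding lam_def using S by (simp add: less_divide_eq mult.commute)
      qed
      have lam4: "4 * lam \<le> e"
      proof -
        have "l < e/(4*S)" using l(2) by simp
        then show ?thesis unfolding lam_def using S by (simp add: less_divide_eq mult.commute mult.left_commute)
      qed
      define c where "c = E f + ennreal (4*lam)"
      define G where "G = (\<lambda>g. if c < E (clipw f lam sig (S*\<alpha>) g) then 2 else (0::ennreal))"
      have "G (\<lambda>x. h x / l) \<le> E_e M E (\<lambda>x. h x / l)"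
      proof (rule E_e_ge)
        show "lsc_L0 M G" unfolding G_def by (rule G_lsc[OF ndf sf f lam0 sig])
        show "G g \<le> E_ext M E g" for g
          unfolding G_def c_def using S \<alpha> by (intro G_le[OF ndf f lam0 lam1 sig]) simp
      qed
      then have "G (\<lambda>x. h x / l) \<le> 1" using l(3) by order
      then have nl: "\<not> c < E (clipw f lam sig (S*\<alpha>) (\<lambda>x. h x / l))"
        unfolding G_def by (auto split: if_splits)
      have eq: "clipw f lam sig (S*\<alpha>) (\<lambda>x. h x / l) = clipw f S sig (S*\<alpha>) h"
        unfolding clipw_eq lam_def using l(1) by (intro ext) simp
      have "E (clipw f S sig (S*\<alpha>) h) \<le> c" using nl eq by (simp add: not_less)
      also have "c \<le> E f + ennreal e" unfolding c_def using lam4 lam0 by simp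
      finally show "E (clipw f S sig (S*\<alpha>) h) \<le> E f + ennreal e" .
    qed
    define fs where "fs n = clipw f (real (Suc n)) sig (real (Suc n) * \<alpha>) h" for n
    have fsm[measurable]: "\<And>n. fs n \<in> borel_measurable M" unfolding fs_def by (intro clipw_meas) auto
    have Lfs: "\<And>n. L2 M (fs n)" unfolding fs_def by (rule clipw_L2[OF f]) simp
    have Lind: "L2 M (\<lambda>x. indicator A x * f x)"
      by (rule L2_bound1[OF f]) (auto simp: indicator_def)
    have lim: "(\<lambda>n. \<integral>x. (fs n x - indicator A x * f x)\<^sup>2 \<partial>M) \<longlonglongrightarrow> 0"
    proof -
      have "(\<lambda>n. \<integral>x. (fs n x - indicator A x * f x)\<^sup>2 \<partial>M) \<longlonglongrightarrow> integral\<^sup>L M (\<lambda>x. 0)"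
      proof (rule integral_dominated_convergence[where w="\<lambda>x. 4 * (f x)\<^sup>2"])
        show "(\<lambda>x. 0::real) \<in> borel_measurable M" by simp
        show "\<And>n. (\<lambda>x. (fs n x - indicator A x * f x)\<^sup>2) \<in> borel_measurable M" by measurable
        show "integrable M (\<lambda>x. 4 * (f x)\<^sup>2)" using f unfolding L2_def by auto
        show "AE x in M. norm ((fs n x - indicator A x * f x)\<^sup>2) \<le> 4 * (f x)\<^sup>2" for n
        proof (rule AE_I2)
          fix x
          have "\<bar>fs n x - indicator A x * f x\<bar> \<le> 2 * \<bar>f x\<bar>"
            using clipw_abs[of f "real (Suc n)" sig "real (Suc n) * \<alpha>" h x]
            unfolding fs_def by (auto simp: indicator_def)
          then have "\<bar>fs n x - indicator A x * f x\<bar>\<^sup>2 \<le> (2 * \<bar>f x\<bar>)\<^sup>2"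
            by (intro power_mono) auto
          then show "norm ((fs n x - indicator A x * f x)\<^sup>2) \<le> 4 * (f x)\<^sup>2"
            by (simp add: power_mult_distrib)
        qed
        show "AE x in M. (\<lambda>n. (fs n x - indicator A x * f x)\<^sup>2) \<longlonglongrightarrow> 0"
        proof (rule AE_I2)
          fix x assume x: "x \<in> space M"
          have "eventually (\<lambda>n. fs n x = indicator A x * f x) sequentially"
          proof (cases "sig * h x > \<alpha>")
            case True
            define d where "d = sig * h x - \<alpha>"
            have d: "0 < d" unfolding d_def using True by simp
            obtain N where N: "\<bar>f x\<bar> < real N * d" using reals_Archimedean3[OF d] by blast
            show ?thesis unfolding eventually_sequentially
            proof (intro exI allI impI)
              fix n assume n: "N \<le> n"
              have "real N * d \<le> real (Suc n) * d" using n d by (intro mult_right_mono) auto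
              moreover have "real (Suc n) * (sig * h x) - real (Suc n) * \<alpha> = real (Suc n) * d"
                unfolding d_def by (simp add: algebra_simps)
              ultimately have u: "\<bar>f x\<bar> \<le> real (Suc n) * (sig * h x) - real (Suc n) * \<alpha>" using N by linarith
              have "fs n x = f x" unfolding fs_def clipw_def uf_def by (rule clip_big[OF u])
              then show "fs n x = indicator A x * f x" using x True by (simp add: A_def)
            qed
          next
            case False
            show ?thesis
            proof (rule always_eventually, intro allI)
              fix n
              have "real (Suc n) * (sig * h x) - real (Suc n) * \<alpha> = real (Suc n) * (sig * h x - \<alpha>)"
                by (simp add: algebra_simps)
              also have "\<dots> \<le> 0" using False by (intro mult_nonneg_nonpos) auto
              finally have u: "real (Suc n) * (sig * h x) - real (Suc n) * \<alpha> \<le> 0" .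
              have "fs n x = 0" unfolding fs_def clipw_def uf_def by (rule clip_zero[OF u])
              then show "fs n x = indicator A x * f x" using x False by (simp add: A_def)
            qed
          qed
          then have "eventually (\<lambda>n. (fs n x - indicator A x * f x)\<^sup>2 = 0) sequentially"
            by eventually_elim simp
          then show "(\<lambda>n. (fs n x - indicator A x * f x)\<^sup>2) \<longlonglongrightarrow> 0" by (rule tendsto_eventually)
        qed
      qed
      then show ?thesis by simp
    qed
    have "E (\<lambda>x. indicator A x * f x) \<le> liminf (\<lambda>n. E (fs n))"
      by (rule E_lsc[OF ndf Lfs Lind lim])
    also have "\<dots> \<le> limsup (\<lambda>n. E (fs n))" by (rule Liminf_le_Limsup) simp
    also have "\<dots> \<le> E f"
      by (rule Limsup_bounded) (auto intro!: always_eventually step simp: fs_def)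
    finally show ?thesis .
  qed
  show ?thesis unfolding E_invariant_def A_def[symmetric] using Am main by blast
qed

end

lemma small_of_ker:
  assumes h: "h \<in> ker_Le M E" and e: "0 < \<epsilon>"
  shows "\<exists>l>0. l < \<epsilon> \<and> E_e M E (\<lambda>x. h x / l) \<le> 1"
proof -
  have hM: "h \<in> M_Ee M E" and n0: "norm_Le M E h = 0" using h unfolding ker_Le_def by auto
  have lim: "((\<lambda>l. E_e M E (\<lambda>x. l * h x)) \<longlongrightarrow> 0) (at_right (0::real))"
    using hM unfolding M_Ee_def by auto
  have "eventually (\<lambda>l. E_e M E (\<lambda>x. l * h x) < 1) (at_right (0::real))"
    using order_tendstoD(2)[OF lim, of 1] by simp
  then obtain b where b: "b > 0" "\<And>y. y > 0 \<Longrightarrow> y < b \<Longrightarrow> E_e M E (\<lambda>x. y * h x) < 1"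
    unfolding eventually_at_right_field by auto
  define Q where "Q = {l::real. l > 0 \<and> E_e M E (\<lambda>x. h x / l) \<le> 1}"
  have "2 / b \<in> Q"
  proof -
    have "E_e M E (\<lambda>x. (b/2) * h x) < 1" using b by (intro b(2)) auto
    moreover have "(\<lambda>x. h x / (2 / b)) = (\<lambda>x. (b/2) * h x)" by (rule ext) simp
    ultimately show ?thesis unfolding Q_def using b by simp
  qed
  then have Qne: "Q \<noteq> {}" by auto
  have "Inf Q < \<epsilon>" using n0 e unfolding norm_Le_def Q_def by simp
  then obtain l where "l \<in> Q" "l < \<epsilon>" using cInf_lessD[OF Qne] by blast
  then show ?thesis unfolding Q_def by auto
qed

lemma dich:
  assumes irr: "E_irreducible M E" and inv: "E_invariant M E {x\<in>space M. k x > \<alpha>}"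
  shows "(AE x in M. k x > \<alpha>) \<or> (AE x in M. \<not> k x > \<alpha>)"
proof -
  define A where "A = {x\<in>space M. k x > \<alpha>}"
  have As: "A \<in> sets M" using inv unfolding E_invariant_def A_def by auto
  have "emeasure M A = 0 \<or> emeasure M (space M - A) = 0"
    using irr inv unfolding E_irreducible_def A_def by blast
  then show ?thesis
  proof
    assume "emeasure M A = 0"
    then have "A \<in> null_sets M" using As by auto
    then have "AE x in M. x \<notin> A" by (rule AE_not_in)
    then have "AE x in M. \<not> k x > \<alpha>" using AE_space by eventually_elim (auto simp: A_def)
    then show ?thesis by simp
  next
    assume "emeasure M (space M - A) = 0"
    then have "space M - A \<in> null_sets M" using As by auto
    then have "AE x in M. x \<notin> space M - A" by (rule AE_not_in)
    then have "AE x in M. k x > \<alpha>" using AE_space by eventually_elim (auto simp: A_def)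
    then show ?thesis by simp
  qed
qed

lemma ae_const_aux:
  fixes k :: "'a \<Rightarrow> real"
  assumes dich: "\<And>\<alpha>. \<alpha> \<ge> 0 \<Longrightarrow> (AE x in M. k x > \<alpha>) \<or> (AE x in M. \<not> k x > \<alpha>)"
    and pos: "AE x in M. k x > 0"
  shows "\<exists>c. AE x in M. k x = c"
proof (cases "AE x in M. False")
  case True
  then show ?thesis by (auto elim: eventually_mono)
next
  case nF: False
  define S where "S = {\<alpha>. \<alpha> \<ge> 0 \<and> (AE x in M. k x > \<alpha>)}"
  have S0: "0 \<in> S" unfolding S_def using pos by simp
  obtain N :: nat where N: "real N \<notin> S"
  proof (rule ccontr)
    assume "\<not> thesis"
    then have "\<forall>n::nat. AE x in M. k x > real n" using that unfolding S_def by auto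
    then have "AE x in M. \<forall>n::nat. k x > real n" by (simp add: AE_all_countable)
    then have "AE x in M. False"
    proof (rule eventually_mono)
      fix x assume "\<forall>n::nat. k x > real n"
      moreover obtain n :: nat where "k x \<le> real n" using real_arch_simple by blast
      ultimately show False by (metis not_le)
    qed
    then show False using nF by simp
  qed
  have bdd: "bdd_above S"
  proof (rule bdd_aboveI[of _ "real N"])
    fix a assume a: "a \<in> S"
    show "a \<le> real N"
    proof (rule ccontr)
      assume "\<not> a \<le> real N"
      then have "AE x in M. k x > real N" using a unfolding S_def by (auto elim: eventually_mono)
      then show False using N unfolding S_def by simp
    qed
  qed
  define c where "c = Sup S"
  have c0: "0 \<le> c" unfolding c_def using S0 bdd by (rule cSup_upper)
  have lo: "AE x in M. k x > c - inverse (real (Suc m))" for m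
  proof -
    have "c - inverse (real (Suc m)) < Sup S" unfolding c_def[symmetric] by simp
    then obtain a where "a \<in> S" "c - inverse (real (Suc m)) < a"
      using less_cSup_iff[OF _ bdd] S0 by blast
    then show ?thesis unfolding S_def by (auto elim: eventually_mono)
  qed
  have hi: "AE x in M. \<not> k x > c + inverse (real (Suc m))" for m
  proof -
    have ge: "c + inverse (real (Suc m)) \<ge> 0" using c0 by (simp add: add_nonneg_nonneg)
    have "c + inverse (real (Suc m)) \<notin> S"
    proof
      assume "c + inverse (real (Suc m)) \<in> S"
      then have "c + inverse (real (Suc m)) \<le> c" unfolding c_def using bdd by (rule cSup_upper)
      then show False by simp
    qed
    then have "\<not> (AE x in M. k x > c + inverse (real (Suc m)))" using ge unfolding S_def by auto
    then show ?thesis using dich[OF ge] by blast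
  qed
  have "AE x in M. \<forall>m. k x > c - inverse (real (Suc m)) \<and> \<not> k x > c + inverse (real (Suc m))"
    using lo hi by (simp add: AE_all_countable AE_conj_iff)
  then have "AE x in M. k x = c"
  proof (rule eventually_mono)
    fix x assume H: "\<forall>m. k x > c - inverse (real (Suc m)) \<and> \<not> k x > c + inverse (real (Suc m))"
    show "k x = c"
    proof (rule ccontr)
      assume ne: "k x \<noteq> c"
      then have "0 < \<bar>k x - c\<bar>" by simp
      then obtain m where m: "inverse (real (Suc m)) < \<bar>k x - c\<bar>" using reals_Archimedean by blast
      then show False using H[rule_format, of m] by (auto simp: abs_if split: if_splits)
    qed
  qed
  then show ?thesis by blast
qed

theorem theorem3p16:
  fixes M :: "'a measure" and E :: "('a \<Rightarrow> real) \<Rightarrow> ennreal"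
  assumes "sigma_finite_measure M"
    and "nonlinear_dirichlet_form M E"
  shows "(\<forall>h \<in> ker_Le M E. \<forall>\<alpha>::real. \<alpha> \<ge> 0 \<longrightarrow> E_invariant M E {x \<in> space M. h x > \<alpha>})
         \<and> (E_irreducible M E \<longrightarrow> (\<forall>h \<in> ker_Le M E. \<exists>c::real. AE x in M. h x = c))"
proof -
  have inv: "E_invariant M E {x \<in> space M. sig * h x > \<alpha>}"
    if h: "h \<in> ker_Le M E" and a: "\<alpha> \<ge> 0" and sig: "\<bar>sig\<bar> = 1" for h :: "'a \<Rightarrow> real" and sig \<alpha> :: real
  proof (rule core[OF assms(2) assms(1)])
    show "h \<in> borel_measurable M" using h unfolding ker_Le_def M_Ee_def by auto
    show "\<And>\<epsilon>. 0 < \<epsilon> \<Longrightarrow> \<exists>l>0. l < \<epsilon> \<and> E_e M E (\<lambda>x. h x / l) \<le> 1"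
      by (rule small_of_ker[OF h])
  qed (use a sig in auto)
  have partA: "\<forall>h \<in> ker_Le M E. \<forall>\<alpha>::real. \<alpha> \<ge> 0 \<longrightarrow> E_invariant M E {x \<in> space M. h x > \<alpha>}"
    using inv[of _ _ 1] by simp
  have partB: "\<exists>c::real. AE x in M. h x = c" if irr: "E_irreducible M E" and h: "h \<in> ker_Le M E" for h
  proof -
    have d1: "(AE x in M. h x > \<alpha>) \<or> (AE x in M. \<not> h x > \<alpha>)" if "\<alpha> \<ge> 0" for \<alpha> :: real
      using dich[OF irr, where k=h and \<alpha>=\<alpha>] partA h that by blast
    have d2: "(AE x in M. - h x > \<alpha>) \<or> (AE x in M. \<not> - h x > \<alpha>)" if "\<alpha> \<ge> 0" for \<alpha> :: real
    proof -
      have "E_invariant M E {x \<in> space M. - h x > \<alpha>}" using inv[OF h that, of "-1"] by simp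
      then show ?thesis by (rule dich[OF irr])
    qed
    show ?thesis
    proof (cases "AE x in M. h x > 0")
      case True
      show ?thesis
      proof (rule ae_const_aux)
        show "AE x in M. h x > 0" by (rule True)
        fix \<alpha> :: real assume "\<alpha> \<ge> 0"
        then show "(AE x in M. h x > \<alpha>) \<or> (AE x in M. \<not> h x > \<alpha>)" by (rule d1)
      qed
    next
      case False
      then have neg: "AE x in M. \<not> h x > 0" using d1[of 0] by simp
      show ?thesis
      proof (cases "AE x in M. - h x > 0")
        case True
        have "\<exists>c. AE x in M. - h x = c"
        proof (rule ae_const_aux)
          show "AE x in M. - h x > 0" by (rule True)
          fix \<alpha> :: real assume "\<alpha> \<ge> 0"
          then show "(AE x in M. - h x > \<alpha>) \<or> (AE x in M. \<not> - h x > \<alpha>)" by (rule d2)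
        qed
        then obtain c where "AE x in M. - h x = c" by blast
        then have "AE x in M. h x = - c" by (auto elim: eventually_mono)
        then show ?thesis by blast
      next
        case False
        then have "AE x in M. \<not> - h x > 0" using d2[of 0] by simp
        with neg have "AE x in M. h x = 0" by eventually_elim simp
        then show ?thesis by blast
      qed
    qed
  qed
  show ?thesis using partA partB by blast
qed

end
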